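(* Let $p,q,r\in\mathbb N$ and let $\mathbf K$ be a commutative field. Suppose $A_1,\dots,A_d\in\mathrm{Rec}_{p\times r}(\mathbf K)$ and $B_1,\dots,B_e\in\mathrm{Rec}_{r\times q}(\mathbf K)$ are such that there exist matrices $\rho_{\mathcal A}(s,u)\in\mathbf K^{d\times d}$ ($0\le s<p$, $0\le u<r$) and $\rho_{\mathcal B}(u,t)\in\mathbf K^{e\times e}$ ($0\le u<r$, $0\le t<q$) with $\rho(s,u)A_i=\sum_{k=1}^d\rho_{\mathcal A}(s,u)_{k,i}A_k$ and $\rho(u,t)B_j=\sum_{l=1}^e\rho_{\mathcal B}(u,t)_{l,j}B_l$ for all $i,j$. Set $C_{ij}=A_iB_j\in\mathrm{Rec}_{p\times q}(\mathbf K)$. Then $C_{ij}[\emptyset,\emptyset]=A_i[\emptyset,\emptyset]\,B_j[\emptyset,\emptyset]$ and, for all $0\le s<p$, $0\le t<q$, $$\rho(s,t)C_{ij}=\sum_{k=1}^d\sum_{l=1}^e\Big(\sum_{u=0}^{r-1}\rho_{\mathcal A}(s,u)_{k,i}\,\rho_{\mathcal B}(u,t)_{l,j}\Big)C_{kl}.$$ Thus the $C_{ij}$ span a recursively closed subspace with shift matrices $\rho_{\mathcal C}(s,t)_{kl,ij}=\sum_{u=0}^{r-1}\rho_{\mathcal A}(s,u)_{k,i}\rho_{\mathcal B}(u,t)_{l,j}$.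
   Context: For $p,q,l\in\mathbb N$, $\mathcal M_{p\times q}^l$ is the set of pairs $(U,W)$ of words of common length $l$ with $U\in\{0,\dots,p-1\}^l$, $W\in\{0,\dots,q-1\}^l$, $\mathcal M_{p\times q}=\bigcup_l\mathcal M_{p\times q}^l$; $(\emptyset,\emptyset)$ is the empty word. Functions $A:\mathcal M_{p\times q}\to\mathbf K$ have values $A[U,W]$. Shift maps: $(\rho(S,T)A)[U,W]=A[US,WT]$; for a single letter pair $(s,t)$ we write $\rho(s,t)$. $\mathrm{Rec}_{p\times q}(\mathbf K)$ is the set of $A$ with finite-dimensional span of $\{\rho(S,T)A\}$. Matrix product: $(AB)[U,W]=\sum_{V\in\{0,\dots,r-1\}^l}A[U,V]B[V,W]$ for $(U,W)$ of length $l$. *)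

theory Defs
  imports Main
begin

text \<open>Words over {0,...,p-1} are lists of naturals; a function on M_{p x q}
  is a map nat list => nat list => 'k, of which only the values on
  M_{p x q} matter.\<close>

definition word_pairs :: "nat \<Rightarrow> nat \<Rightarrow> (nat list \<times> nat list) set" where
  "word_pairs p q = {(U, W). length U = length W \<and> set U \<subseteq> {..<p} \<and> set W \<subseteq> {..<q}}"

definition words :: "nat \<Rightarrow> nat \<Rightarrow> nat list set" where
  "words r l = {V. length V = l \<and> set V \<subseteq> {..<r}}"

definition shift :: "nat list \<Rightarrow> nat list \<Rightarrow> (nat list \<Rightarrow> nat list \<Rightarrow> 'k) \<Rightarrow> (nat list \<Rightarrow> nat list \<Rightarrow> 'k)" where
  "shift S T A = (\<lambda>U W. A (U @ S) (W @ T))"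

definition matprod :: "nat \<Rightarrow> (nat list \<Rightarrow> nat list \<Rightarrow> 'k::comm_semiring_1) \<Rightarrow> (nat list \<Rightarrow> nat list \<Rightarrow> 'k) \<Rightarrow> (nat list \<Rightarrow> nat list \<Rightarrow> 'k)" where
  "matprod r A B = (\<lambda>U W. \<Sum>V\<in>words r (length U). A U V * B V W)"

text \<open>Rec_{p x q}(K): the span of all shifts rho(S,T)A (as functions on M_{p x q})
  is finite-dimensional, i.e. contained in the span of finitely many functions.\<close>
definition recognizable :: "nat \<Rightarrow> nat \<Rightarrow> (nat list \<Rightarrow> nat list \<Rightarrow> 'k::field) \<Rightarrow> bool" where
  "recognizable p q A \<longleftrightarrow>
     (\<exists>F :: (nat list \<Rightarrow> nat list \<Rightarrow> 'k) list.
        \<forall>(S, T) \<in> word_pairs p q. \<exists>c :: nat \<Rightarrow> 'k.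
          \<forall>(U, W) \<in> word_pairs p q. shift S T A U W = (\<Sum>i<length F. c i * (F ! i) U W))"

end

theory Submission
  imports Defs
begin

lemma words_Suc_sum:
  fixes f :: "nat list \<Rightarrow> 'a::comm_monoid_add"
  shows "(\<Sum>V\<in>words r (Suc n). f V) = (\<Sum>V\<in>words r n. \<Sum>u<r. f (V @ [u]))"
proof -
  have eq: "words r (Suc n) = (\<lambda>(V,u). V @ [u]) ` (words r n \<times> {..<r})"
  proof (rule set_eqI, rule iffI)
    fix X assume "X \<in> words r (Suc n)"
    then have X: "length X = Suc n" "set X \<subseteq> {..<r}" by (auto simp: words_def)
    then obtain V u where "X = V @ [u]" by (metis length_Suc_conv_rev)
    with X show "X \<in> (\<lambda>(V,u). V @ [u]) ` (words r n \<times> {..<r})"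
      by (auto simp: words_def image_iff)
  qed (auto simp: words_def)
  have inj: "inj_on (\<lambda>(V,u). V @ [u]) (words r n \<times> {..<r})"
    by (auto simp: inj_on_def)
  have fin: "finite (words r n)"
  proof -
    have "words r n \<subseteq> {xs. set xs \<subseteq> {..<r} \<and> length xs = n}" by (auto simp: words_def)
    moreover have "finite {xs. set xs \<subseteq> {..<r} \<and> length xs = n}"
      by (rule finite_lists_length_eq) simp
    ultimately show ?thesis by (rule finite_subset)
  qed
  show ?thesis
    unfolding eq by (simp add: sum.reindex[OF inj] sum.cartesian_product prod.case_distrib)
qed

lemma step_formula:
  fixes A :: "nat \<Rightarrow> nat list \<Rightarrow> nat list \<Rightarrow> 'k::field"
    and B :: "nat \<Rightarrow> nat list \<Rightarrow> nat list \<Rightarrow> 'k"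
  assumes shA: "\<forall>s<p. \<forall>u<r. \<forall>i<d. \<forall>(U, W) \<in> word_pairs p r.
               shift [s] [u] (A i) U W = (\<Sum>k<d. RA s u k i * A k U W)"
    and shB: "\<forall>u<r. \<forall>t<q. \<forall>j<e. \<forall>(U, W) \<in> word_pairs r q.
               shift [u] [t] (B j) U W = (\<Sum>l<e. RB u t l j * B l U W)"
    and i: "i < d" and j: "j < e" and s: "s < p" and t: "t < q"
    and UW: "(U, W) \<in> word_pairs p q"
  shows "shift [s] [t] (matprod r (A i) (B j)) U W =
              (\<Sum>k<d. \<Sum>l<e. (\<Sum>u<r. RA s u k i * RB u t l j) * matprod r (A k) (B l) U W)"
proof -
  let ?n = "length U"
  have a: "A i (U @ [s]) (V @ [u]) = (\<Sum>k<d. RA s u k i * A k U V)"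
    if "V \<in> words r ?n" "u < r" for V u
  proof -
    have "(U, V) \<in> word_pairs p r" using that UW by (auto simp: words_def word_pairs_def)
    then have "shift [s] [u] (A i) U V = (\<Sum>k<d. RA s u k i * A k U V)"
      using shA s i that(2) by blast
    then show ?thesis by (simp add: shift_def)
  qed
  have b: "B j (V @ [u]) (W @ [t]) = (\<Sum>l<e. RB u t l j * B l V W)"
    if "V \<in> words r ?n" "u < r" for V u
  proof -
    have "(V, W) \<in> word_pairs r q" using that UW by (auto simp: words_def word_pairs_def)
    then have "shift [u] [t] (B j) V W = (\<Sum>l<e. RB u t l j * B l V W)"
      using shB t j that(2) by blast
    then show ?thesis by (simp add: shift_def)
  qed
  have "shift [s] [t] (matprod r (A i) (B j)) U W
      = (\<Sum>V\<in>words r ?n. \<Sum>u<r. A i (U @ [s]) (V @ [u]) * B j (V @ [u]) (W @ [t]))"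
    by (simp add: shift_def matprod_def words_Suc_sum)
  also have "\<dots> = (\<Sum>V\<in>words r ?n. \<Sum>u<r. (\<Sum>k<d. RA s u k i * A k U V) * (\<Sum>l<e. RB u t l j * B l V W))"
    by (intro sum.cong refl) (simp add: a b)
  also have "\<dots> = (\<Sum>V\<in>words r ?n. \<Sum>u<r. \<Sum>k<d. \<Sum>l<e. (RA s u k i * RB u t l j) * (A k U V * B l V W))"
    by (simp add: sum_product mult_ac)
  also have "\<dots> = (\<Sum>u<r. \<Sum>V\<in>words r ?n. \<Sum>k<d. \<Sum>l<e. (RA s u k i * RB u t l j) * (A k U V * B l V W))"
    by (rule sum.swap)
  also have "\<dots> = (\<Sum>u<r. \<Sum>k<d. \<Sum>V\<in>words r ?n. \<Sum>l<e. (RA s u k i * RB u t l j) * (A k U V * B l V W))"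
    by (intro sum.cong refl, rule sum.swap)
  also have "\<dots> = (\<Sum>k<d. \<Sum>u<r. \<Sum>V\<in>words r ?n. \<Sum>l<e. (RA s u k i * RB u t l j) * (A k U V * B l V W))"
    by (rule sum.swap)
  also have "\<dots> = (\<Sum>k<d. \<Sum>u<r. \<Sum>l<e. \<Sum>V\<in>words r ?n. (RA s u k i * RB u t l j) * (A k U V * B l V W))"
    by (intro sum.cong refl, rule sum.swap)
  also have "\<dots> = (\<Sum>k<d. \<Sum>l<e. \<Sum>u<r. \<Sum>V\<in>words r ?n. (RA s u k i * RB u t l j) * (A k U V * B l V W))"
    by (rule sum.cong[OF refl], rule sum.swap)
  also have "\<dots> = (\<Sum>k<d. \<Sum>l<e. (\<Sum>u<r. RA s u k i * RB u t l j) * matprod r (A k) (B l) U W)"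
    unfolding matprod_def sum_distrib_right by (simp add: sum_distrib_left)
  finally show ?thesis .
qed

definition in_span :: "nat \<Rightarrow> nat \<Rightarrow> (nat list \<Rightarrow> nat list \<Rightarrow> 'k::field) list \<Rightarrow> (nat list \<Rightarrow> nat list \<Rightarrow> 'k) \<Rightarrow> bool" where
  "in_span p q F f \<longleftrightarrow> (\<exists>c :: nat \<Rightarrow> 'k. \<forall>(U, W) \<in> word_pairs p q. f U W = (\<Sum>i<length F. c i * (F ! i) U W))"

lemma in_span_member: "m < length F \<Longrightarrow> in_span p q F (F ! m)"
  unfolding in_span_def
proof (rule exI[of _ "\<lambda>i. if i = m then 1 else 0"], clarify)
  fix U W assume "m < length F"
  then have "(\<Sum>i<length F. (if i = m then 1 else 0) * (F ! i) U W) = (\<Sum>i<length F. if i = m then (F ! i) U W else 0)"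
    by (intro sum.cong) auto
  also have "\<dots> = (F ! m) U W" using \<open>m < length F\<close> by simp
  finally show "(F ! m) U W = (\<Sum>i<length F. (if i = m then 1 else 0) * (F ! i) U W)" by simp
qed

lemma in_span_sum:
  assumes "finite I" "\<forall>x\<in>I. in_span p q F (g x)"
  shows "in_span p q F (\<lambda>U W. \<Sum>x\<in>I. a x * g x U W)"
proof -
  have h: "\<forall>x\<in>I. \<exists>c. \<forall>(U, W) \<in> word_pairs p q. g x U W = (\<Sum>i<length F. c i * (F ! i) U W)"
    using assms(2) unfolding in_span_def by blast
  obtain c where c: "\<forall>x\<in>I. \<forall>(U, W) \<in> word_pairs p q. g x U W = (\<Sum>i<length F. c x i * (F ! i) U W)"
    using bchoice[OF h] by blast
  show ?thesis unfolding in_span_def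
  proof (rule exI[of _ "\<lambda>i. \<Sum>x\<in>I. a x * c x i"], clarify)
    fix U W assume uw: "(U, W) \<in> word_pairs p q"
    have "(\<Sum>x\<in>I. a x * g x U W) = (\<Sum>x\<in>I. a x * (\<Sum>i<length F. c x i * (F ! i) U W))"
      using c uw by (intro sum.cong refl) auto
    also have "\<dots> = (\<Sum>i<length F. (\<Sum>x\<in>I. a x * c x i) * (F ! i) U W)"
    proof -
      have "(\<Sum>x\<in>I. a x * (\<Sum>i<length F. c x i * (F ! i) U W)) = (\<Sum>x\<in>I. \<Sum>i<length F. a x * c x i * (F ! i) U W)"
        by (simp add: sum_distrib_left mult_ac)
      also have "\<dots> = (\<Sum>i<length F. \<Sum>x\<in>I. a x * c x i * (F ! i) U W)"
        by (rule sum.swap)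
      also have "\<dots> = (\<Sum>i<length F. (\<Sum>x\<in>I. a x * c x i) * (F ! i) U W)"
        by (simp add: sum_distrib_right)
      finally show ?thesis .
    qed
    finally show "(\<Sum>x\<in>I. a x * g x U W) = (\<Sum>i<length F. (\<Sum>x\<in>I. a x * c x i) * (F ! i) U W)" .
  qed
qed

theorem mainTheorem6:
  fixes p q r d e :: nat
    and A :: "nat \<Rightarrow> nat list \<Rightarrow> nat list \<Rightarrow> 'k::field"
    and B :: "nat \<Rightarrow> nat list \<Rightarrow> nat list \<Rightarrow> 'k"
    and RA :: "nat \<Rightarrow> nat \<Rightarrow> nat \<Rightarrow> nat \<Rightarrow> 'k"
    and RB :: "nat \<Rightarrow> nat \<Rightarrow> nat \<Rightarrow> nat \<Rightarrow> 'k"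
  assumes recA: "\<forall>i<d. recognizable p r (A i)"
    and recB: "\<forall>j<e. recognizable r q (B j)"
    and shA: "\<forall>s<p. \<forall>u<r. \<forall>i<d. \<forall>(U, W) \<in> word_pairs p r.
               shift [s] [u] (A i) U W = (\<Sum>k<d. RA s u k i * A k U W)"
    and shB: "\<forall>u<r. \<forall>t<q. \<forall>j<e. \<forall>(U, W) \<in> word_pairs r q.
               shift [u] [t] (B j) U W = (\<Sum>l<e. RB u t l j * B l U W)"
  shows "\<forall>i<d. \<forall>j<e.
           recognizable p q (matprod r (A i) (B j))
         \<and> matprod r (A i) (B j) [] [] = A i [] [] * B j [] []
         \<and> (\<forall>s<p. \<forall>t<q. \<forall>(U, W) \<in> word_pairs p q.
              shift [s] [t] (matprod r (A i) (B j)) U W =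
              (\<Sum>k<d. \<Sum>l<e. (\<Sum>u<r. RA s u k i * RB u t l j) * matprod r (A k) (B l) U W))"
proof -
  define C where "C = (\<lambda>k l. matprod r (A k) (B l))"
  define F where "F = map (\<lambda>m. C (m div e) (m mod e)) [0..<d*e]"
  have step: "\<forall>i<d. \<forall>j<e. \<forall>s<p. \<forall>t<q. \<forall>(U, W) \<in> word_pairs p q.
              shift [s] [t] (matprod r (A i) (B j)) U W =
              (\<Sum>k<d. \<Sum>l<e. (\<Sum>u<r. RA s u k i * RB u t l j) * matprod r (A k) (B l) U W)"
    using step_formula[OF shA shB] by blast
  have memb: "in_span p q F (C k l)" if "k < d" "l < e" for k l
  proof -
    have m: "k * e + l < d * e"
    proof -
      have "k * e + l < k * e + e" using that by simp
      also have "\<dots> = Suc k * e" by simp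
      also have "\<dots> \<le> d * e" using that by (intro mult_le_mono1) simp
      finally show ?thesis .
    qed
    have "F ! (k * e + l) = C k l" using m that by (simp add: F_def)
    with in_span_member[of "k * e + l" F p q] m show ?thesis by (simp add: F_def)
  qed
  have main: "\<forall>S T k l. length S = n \<longrightarrow> (S, T) \<in> word_pairs p q \<longrightarrow> k < d \<longrightarrow> l < e \<longrightarrow>
      in_span p q F (shift S T (C k l))" for n
  proof (induction n)
    case 0
    then show ?case using memb by (auto simp: word_pairs_def shift_def)
  next
    case (Suc n)
    show ?case
    proof (intro allI impI)
      fix S T k l assume S: "length S = Suc n" and ST: "(S, T) \<in> word_pairs p q"
        and k: "k < d" and l: "l < e"
      obtain S' s where S': "S = S' @ [s]" using S by (metis length_Suc_conv_rev)
      have "length T = Suc n" using S ST by (simp add: word_pairs_def)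
      then obtain T' t where T': "T = T' @ [t]" by (metis length_Suc_conv_rev)
      have s: "s < p" and t: "t < q" and ST': "(S', T') \<in> word_pairs p q" and lS': "length S' = n"
        using ST S S' T' by (auto simp: word_pairs_def)
      have "in_span p q F (\<lambda>U W. \<Sum>k'<d. (\<Sum>l'<e. (\<Sum>u<r. RA s u k' k * RB u t l' l) * shift S' T' (C k' l') U W))"
        by (rule in_span_sum[where a="\<lambda>_. 1", simplified], simp,
            intro ballI in_span_sum, simp, use Suc.IH ST' lS' in auto)
      moreover have "\<forall>(U, W) \<in> word_pairs p q. shift S T (C k l) U W =
          (\<Sum>k'<d. (\<Sum>l'<e. (\<Sum>u<r. RA s u k' k * RB u t l' l) * shift S' T' (C k' l') U W))"
      proof clarify
        fix U W assume uw: "(U, W) \<in> word_pairs p q"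
        have uw': "(U @ S', W @ T') \<in> word_pairs p q" using uw ST' by (auto simp: word_pairs_def)
        have "shift S T (C k l) U W = shift [s] [t] (C k l) (U @ S') (W @ T')"
          by (simp add: S' T' shift_def)
        also have "\<dots> = (\<Sum>k'<d. (\<Sum>l'<e. (\<Sum>u<r. RA s u k' k * RB u t l' l) * C k' l' (U @ S') (W @ T')))"
          using step k l s t uw' unfolding C_def by blast
        finally show "shift S T (C k l) U W =
          (\<Sum>k'<d. (\<Sum>l'<e. (\<Sum>u<r. RA s u k' k * RB u t l' l) * shift S' T' (C k' l') U W))"
          by (simp add: shift_def)
      qed
      ultimately show "in_span p q F (shift S T (C k l))"
        unfolding in_span_def
      proof (elim conjE exE)
        fix c assume sp: "\<forall>(U, W) \<in> word_pairs p q. (\<Sum>k'<d. (\<Sum>l'<e. (\<Sum>u<r. RA s u k' k * RB u t l' l) * shift S' T' (C k' l') U W)) = (\<Sum>i<length F. c i * (F ! i) U W)"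
          and eqs: "\<forall>(U, W) \<in> word_pairs p q. shift S T (C k l) U W =
          (\<Sum>k'<d. (\<Sum>l'<e. (\<Sum>u<r. RA s u k' k * RB u t l' l) * shift S' T' (C k' l') U W))"
        show "\<exists>c. \<forall>(U, W) \<in> word_pairs p q. shift S T (C k l) U W = (\<Sum>i<length F. c i * (F ! i) U W)"
        proof (rule exI[of _ c], clarify)
          fix U W assume "(U, W) \<in> word_pairs p q"
          with sp eqs show "shift S T (C k l) U W = (\<Sum>i<length F. c i * (F ! i) U W)" by fastforce
        qed
      qed
    qed
  qed
  show ?thesis
  proof (intro allI impI conjI)
    fix i j assume i: "i < d" and j: "j < e"
    show "recognizable p q (matprod r (A i) (B j))"
      unfolding recognizable_def
      using main i j unfolding in_span_def C_def by blast
    show "matprod r (A i) (B j) [] [] = A i [] [] * B j [] []"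
    proof -
      have "words r 0 = {[]}" by (auto simp: words_def)
      then show ?thesis by (simp add: matprod_def)
    qed
    fix s t assume s: "s < p" and t: "t < q"
    show "\<forall>(U, W) \<in> word_pairs p q.
              shift [s] [t] (matprod r (A i) (B j)) U W =
              (\<Sum>k<d. \<Sum>l<e. (\<Sum>u<r. RA s u k i * RB u t l j) * matprod r (A k) (B l) U W)"
      using step i j s t by blast
  qed
qed

end
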